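(* Let $P$ be a special product rule, $\Sigma$ a finite alphabet, $\mathcal A=\langle X,F,\Delta\rangle$ a polynomial $P$-automaton with finite $X$, $x_1\in X$, and let $I_n$ ($n\in\mathbb N$) be the ideal of $\mathbb Q[X]$ generated by $\{\tilde\Delta_wx_1:|w|\le n\}$. Let $N\in\mathbb N$ be such that $I_N=I_{N+1}=I_{N+2}=\cdots$. Then $[\![x_1]\!]_{\mathcal A}=\mathbb 0$ if and only if $([\![x_1]\!]_{\mathcal A})_w=0$ for all words $w\in\Sigma^*$ of length at most $N$.
   Context: Let $\Sigma^*$ be the finite words over $\Sigma$ with empty word $\varepsilon$. A series is $f:\Sigma^*\to\mathbb Q$, $f_w=f(w)$; $\mathbb 0$ is the zero series; $\delta_af$ ($a\in\Sigma$) is $w\mapsto f(aw)$. $\mathbb Q_0[X]$ is the set of polynomials of $\mathbb Q[X]$ with zero constant term. Terms over $X$ are generated by $u,v::=x\mid 0\mid c\cdot u\mid u+v\mid u*v$; a product rule is a term $P$ over $\{x,\dot x,y,\dot y\}$; $u\approx v$ iff $u,v$ denote the same polynomial. $P$ is special if $P(x+y,\dot x+\dot y,z,\dot z)\approx P(x,\dot x,z,\dot z)+P(y,\dot y,z,\dot z)$, $P(x,\dot x,y*z,P(y,\dot y,z,\dot z))\approx P(x*y,P(x,\dot x,y,\dot y),z,\dot z)$, $P(x,\dot x,y,\dot y)\approx P(y,\dot y,x,\dot x)$. For special $P$, every $D:X\to\mathbb Q_0[X]$ has a unique $\mathbb Q$-linear extension $\tilde D$ to $\mathbb Q_0[X]$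 with $\tilde Dx=Dx$ and $\tilde D(\alpha\beta)=P(\alpha,\tilde D\alpha,\beta,\tilde D\beta)$. A polynomial $P$-automaton is $\mathcal A=\langle X,F,\Delta\rangle$ with $F:X\to\mathbb Q$ and $\Delta_a:X\to\mathbb Q_0[X]$; $F$ extends to $\mathbb Q_0[X]$ by evaluation; $\tilde\Delta_\varepsilon\alpha=\alpha$, $\tilde\Delta_{aw}\alpha=\tilde\Delta_w\tilde\Delta_a\alpha$; $[\![\alpha]\!]_{\mathcal A}$ is the series $w\mapsto F(\tilde\Delta_w\alpha)$. *)

theory Defs
  imports Complex_Main "HOL-Library.Poly_Mapping"
begin

text \<open>Multivariate polynomials over Q in variables of type 'v:
  finitely supported maps from monomials (exponent vectors) to coefficients.\<close>
type_synonym 'v mpoly = "('v \<Rightarrow>\<^sub>0 nat) \<Rightarrow>\<^sub>0 rat"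

definition Var :: "'v \<Rightarrow> 'v mpoly" where
  "Var x = Poly_Mapping.single (Poly_Mapping.single x 1) 1"

definition Const :: "rat \<Rightarrow> 'v mpoly" where
  "Const c = Poly_Mapping.single 0 c"

definition Q0 :: "'v mpoly set" where
  "Q0 = {p. Poly_Mapping.lookup p 0 = 0}"

definition psubst :: "('v \<Rightarrow> 'w mpoly) \<Rightarrow> 'v mpoly \<Rightarrow> 'w mpoly" where
  "psubst \<sigma> p = (\<Sum>m\<in>Poly_Mapping.keys p. Const (Poly_Mapping.lookup p m) * (\<Prod>x\<in>Poly_Mapping.keys m. \<sigma> x ^ Poly_Mapping.lookup m x))"

definition peval :: "('v \<Rightarrow> rat) \<Rightarrow> 'v mpoly \<Rightarrow> rat" where
  "peval f p = (\<Sum>m\<in>Poly_Mapping.keys p. Poly_Mapping.lookup p m * (\<Prod>x\<in>Poly_Mapping.keys m. f x ^ Poly_Mapping.lookup m x))"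

text \<open>Variables of a product rule: x, x-dot, y, y-dot.\<close>
datatype rvar = RX | RDX | RY | RDY

datatype svar = SX | SDX | SY | SDY | SZ | SDZ

definition Papp :: "rvar mpoly \<Rightarrow> 'w mpoly \<Rightarrow> 'w mpoly \<Rightarrow> 'w mpoly \<Rightarrow> 'w mpoly \<Rightarrow> 'w mpoly" where
  "Papp P a da b db = psubst (\<lambda>v. case v of RX \<Rightarrow> a | RDX \<Rightarrow> da | RY \<Rightarrow> b | RDY \<Rightarrow> db) P"

definition special :: "rvar mpoly \<Rightarrow> bool" where
  "special P \<longleftrightarrow>
     (let x = Var SX; dx = Var SDX; y = Var SY; dy = Var SDY; z = Var SZ; dz = Var SDZ in
       Papp P (x + y) (dx + dy) z dz = Papp P x dx z dz + Papp P y dy z dz \<and>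
       Papp P x dx (y * z) (Papp P y dy z dz) = Papp P (x * y) (Papp P x dx y dy) z dz \<and>
       Papp P x dx y dy = Papp P y dy x dx)"

text \<open>The (unique) Q-linear extension of D to Q_0[X] obeying the product rule P;
  set to 0 outside Q_0[X] to make the function unique.\<close>
definition ext :: "rvar mpoly \<Rightarrow> ('v \<Rightarrow> 'v mpoly) \<Rightarrow> 'v mpoly \<Rightarrow> 'v mpoly" where
  "ext P D = (THE f.
      (\<forall>x. f (Var x) = D x) \<and>
      (\<forall>\<alpha>\<in>Q0. \<forall>\<beta>\<in>Q0. f (\<alpha> + \<beta>) = f \<alpha> + f \<beta>) \<and>
      (\<forall>c. \<forall>\<alpha>\<in>Q0. f (Const c * \<alpha>) = Const c * f \<alpha>) \<and>
      (\<forall>\<alpha>\<in>Q0. \<forall>\<beta>\<in>Q0. f (\<alpha> * \<beta>) = Papp P \<alpha> (f \<alpha>) \<beta> (f \<beta>)) \<and>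
      (\<forall>\<alpha>. \<alpha> \<notin> Q0 \<longrightarrow> f \<alpha> = 0))"

text \<open>tilde Delta_w, with tilde Delta_{aw} = tilde Delta_w o tilde Delta_a.\<close>
fun deltaw :: "rvar mpoly \<Rightarrow> ('a \<Rightarrow> 'v \<Rightarrow> 'v mpoly) \<Rightarrow> 'a list \<Rightarrow> 'v mpoly \<Rightarrow> 'v mpoly" where
  "deltaw P \<Delta> [] \<alpha> = \<alpha>"
| "deltaw P \<Delta> (a # w) \<alpha> = deltaw P \<Delta> w (ext P (\<Delta> a) \<alpha>)"

definition sem :: "rvar mpoly \<Rightarrow> ('v \<Rightarrow> rat) \<Rightarrow> ('a \<Rightarrow> 'v \<Rightarrow> 'v mpoly) \<Rightarrow> 'v mpoly \<Rightarrow> 'a list \<Rightarrow> rat" where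
  "sem P F \<Delta> \<alpha> w = peval F (deltaw P \<Delta> w \<alpha>)"

definition ideal_gen :: "'v mpoly set \<Rightarrow> 'v mpoly set" where
  "ideal_gen G = {p. \<exists>(k::nat) r g. (\<forall>i<k. g i \<in> G) \<and> p = (\<Sum>i<k. r i * g i)}"

end

theory Submission
  imports Defs
begin

definition mon :: "('v \<Rightarrow> rat) \<Rightarrow> ('v \<Rightarrow>\<^sub>0 nat) \<Rightarrow> rat" where
  "mon f m = (\<Prod>x\<in>Poly_Mapping.keys m. f x ^ Poly_Mapping.lookup m x)"

lemma mon_univ: "mon f (m :: ('v::finite) \<Rightarrow>\<^sub>0 nat) = (\<Prod>x\<in>UNIV. f x ^ Poly_Mapping.lookup m x)"
  unfolding mon_def
  by (rule prod.mono_neutral_left) (auto simp: in_keys_iff)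

lemma mon_add: "mon f ((m :: ('v::finite) \<Rightarrow>\<^sub>0 nat) + n) = mon f m * mon f n"
  unfolding mon_univ by (simp add: lookup_add power_add prod.distrib)

lemma peval_mon: "peval f p = (\<Sum>m\<in>Poly_Mapping.keys p. Poly_Mapping.lookup p m * mon f m)"
  unfolding peval_def mon_def by simp

lemma peval_add: "peval f (p + q) = peval f p + peval f q"
  unfolding peval_mon
  by (rule setsum_keys_plus_distrib) (auto simp: distrib_right)

lemma peval_zero: "peval f 0 = 0"
  unfolding peval_def by simp

lemma peval_sum: "peval f (\<Sum>i\<in>A. g i) = (\<Sum>i\<in>A. peval f (g i))"
  by (induction A rule: infinite_finite_induct) (auto simp: peval_zero peval_add)

lemma peval_single: "peval f (Poly_Mapping.single m a) = a * mon f m"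
  unfolding peval_mon by simp

lemma sum_monomials: "p = (\<Sum>m\<in>Poly_Mapping.keys p. Poly_Mapping.single m (Poly_Mapping.lookup p m))"
proof (rule poly_mapping_eqI)
  fix k
  show "Poly_Mapping.lookup p k = Poly_Mapping.lookup (\<Sum>m\<in>Poly_Mapping.keys p. Poly_Mapping.single m (Poly_Mapping.lookup p m)) k"
    by (cases "k \<in> Poly_Mapping.keys p")
      (auto simp: lookup_sum lookup_single when_def in_keys_iff sum.delta)
qed

lemma peval_mult:
  fixes p q :: "(('v::finite) \<Rightarrow>\<^sub>0 nat) \<Rightarrow>\<^sub>0 rat"
  shows "peval f (p * q) = peval f p * peval f q"
proof -
  let ?P = "Poly_Mapping.keys p" and ?Q = "Poly_Mapping.keys q"
  have "p * q = (\<Sum>m\<in>?P. Poly_Mapping.single m (Poly_Mapping.lookup p m)) *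
                (\<Sum>n\<in>?Q. Poly_Mapping.single n (Poly_Mapping.lookup q n))"
    by (subst sum_monomials[of p], subst sum_monomials[of q]) (rule refl)
  also have "\<dots> = (\<Sum>m\<in>?P. \<Sum>n\<in>?Q. Poly_Mapping.single (m + n) (Poly_Mapping.lookup p m * Poly_Mapping.lookup q n))"
    by (simp add: sum_product mult_single)
  finally have "peval f (p * q) = (\<Sum>m\<in>?P. \<Sum>n\<in>?Q. Poly_Mapping.lookup p m * Poly_Mapping.lookup q n * (mon f m * mon f n))"
    by (simp add: peval_sum peval_single mon_add)
  also have "\<dots> = peval f p * peval f q"
    unfolding peval_mon sum_product by (simp add: algebra_simps)
  finally show ?thesis .
qed

lemma sum1: "(\<Sum>i<(1::nat). f i) = f 0"
  by simp

theorem mainTheorem14: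
  fixes P :: "rvar mpoly"
    and F :: "'x::finite \<Rightarrow> rat"
    and \<Delta> :: "'a::finite \<Rightarrow> 'x \<Rightarrow> 'x mpoly"
    and x1 :: 'x
    and I :: "nat \<Rightarrow> 'x mpoly set"
    and N :: nat
  assumes "special P"
    and "\<forall>a x. \<Delta> a x \<in> Q0"
    and "\<forall>n. I n = ideal_gen {deltaw P \<Delta> w (Var x1) | w. length w \<le> n}"
    and "\<forall>n\<ge>N. I n = I N"
  shows "(\<forall>w. sem P F \<Delta> (Var x1) w = 0) \<longleftrightarrow>
         (\<forall>w. length w \<le> N \<longrightarrow> sem P F \<Delta> (Var x1) w = 0)"
proof
  assume "\<forall>w. sem P F \<Delta> (Var x1) w = 0"
  then show "\<forall>w. length w \<le> N \<longrightarrow> sem P F \<Delta> (Var x1) w = 0" by blast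
next
  assume small: "\<forall>w. length w \<le> N \<longrightarrow> sem P F \<Delta> (Var x1) w = 0"
  show "\<forall>w. sem P F \<Delta> (Var x1) w = 0"
  proof
    fix w :: "'a list"
    show "sem P F \<Delta> (Var x1) w = 0"
    proof (cases "length w \<le> N")
      case True then show ?thesis using small by blast
    next
      case False
      have mem: "deltaw P \<Delta> w (Var x1) \<in> {deltaw P \<Delta> u (Var x1) | u. length u \<le> length w}"
        by (rule CollectI, rule exI[of _ w], rule conjI, rule refl, rule le_refl)
      have "(\<forall>i<(1::nat). (\<lambda>_. deltaw P \<Delta> w (Var x1)) i \<in> {deltaw P \<Delta> u (Var x1) | u. length u \<le> length w}) \<and>
            deltaw P \<Delta> w (Var x1) = (\<Sum>i<(1::nat). (\<lambda>_. 1) i * (\<lambda>_. deltaw P \<Delta> w (Var x1)) i)"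
      proof
        show "\<forall>i<(1::nat). (\<lambda>_. deltaw P \<Delta> w (Var x1)) i \<in> {deltaw P \<Delta> u (Var x1) | u. length u \<le> length w}"
          using mem by (intro allI impI)
        have "(\<Sum>i<(1::nat). (\<lambda>_. (1::'x mpoly)) i * (\<lambda>_. deltaw P \<Delta> w (Var x1)) i) = 1 * deltaw P \<Delta> w (Var x1)"
          by (rule sum1)
        then show "deltaw P \<Delta> w (Var x1) = (\<Sum>i<(1::nat). (\<lambda>_. 1) i * (\<lambda>_. deltaw P \<Delta> w (Var x1)) i)"
          by (simp only: mult_1_left)
      qed
      note H = this
      have "deltaw P \<Delta> w (Var x1) \<in> I (length w)"
        unfolding assms(3)[rule_format] ideal_gen_def
        by (rule CollectI, rule exI[of _ "1::nat"], rule exI[of _ "\<lambda>_. 1"], rule exI[of _ "\<lambda>_. deltaw P \<Delta> w (Var x1)"], rule H)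
      moreover have "I (length w) = I N"
        by (rule assms(4)[rule_format]) (use False in linarith)
      ultimately have "deltaw P \<Delta> w (Var x1) \<in> I N" by (simp only:)
      then have "\<exists>(k::nat) r g. (\<forall>i<k. g i \<in> {deltaw P \<Delta> u (Var x1) | u. length u \<le> N}) \<and>
           deltaw P \<Delta> w (Var x1) = (\<Sum>i<k. r i * g i)"
        unfolding assms(3)[rule_format] ideal_gen_def mem_Collect_eq by blast
      then obtain k :: nat and r g where g: "\<forall>i<k. g i \<in> {deltaw P \<Delta> u (Var x1) | u. length u \<le> N}"
        and eq: "deltaw P \<Delta> w (Var x1) = (\<Sum>i<k. r i * g i)"
        by blast
      have "\<forall>i<k. peval F (g i) = 0"
      proof (intro allI impI)
        fix i assume "i < k"
        with g have "g i \<in> {deltaw P \<Delta> u (Var x1) | u. length u \<le> N}" by simp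
        then obtain u where u: "g i = deltaw P \<Delta> u (Var x1)" "length u \<le> N"
          unfolding mem_Collect_eq by (elim exE conjE)
        show "peval F (g i) = 0"
          using small u unfolding sem_def by simp
      qed
      then show ?thesis
        unfolding sem_def eq peval_sum by (simp add: peval_mult)
    qed
  qed
qed

end
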